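(* Let $k\neq0$, $c_1$, $c_2$ be real constants and $f$ a smooth function of $\theta$ on an interval satisfying both $$\sin\theta\Big[\big(3f'+c_1\big)f''-2ff'\Big]+\cos\theta\Big[ff''+4(f')^2+2c_1f'\Big]=0$$ and $$(c_2-f')f''+k(c_1+2f')\cos\theta+k(f''-f)\sin\theta=0$$ (primes denote $d/d\theta$). In polar coordinates $x=r\cos\theta$, $y=r\sin\theta$ ($r>0$), let $V=\frac kr+\frac{f'(\theta)}{r^2}$. Then $$J=\frac13p_\theta^3+\Big(\cos\theta\,p_r-\sin\theta\frac{p_\theta}{r}\Big)p_\theta^2+\Big[(2f'+c_1)\cos\theta-f\sin\theta\Big]p_r-\Big[(3f'+c_1)\sin\theta+f\cos\theta\Big]\frac{p_\theta}{r}-\big(c_2-f'+k\sin\theta\big)p_\theta$$ is a first integral of $\ddot x=-V_{,x}$, $\ddot y=-V_{,y}$, where $p_r=\dot r$ and $p_\theta=r^2\dot\theta$.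
   Context: A first integral is a function of $(t,x,y,\dot x,\dot y)$ whose total time derivative vanishes along every solution of the given equations of motion. *)

theory Defs
  imports "HOL-Analysis.Analysis"
begin

definition polarJ ::
  "(real \<Rightarrow> real) \<Rightarrow> real \<Rightarrow> real \<Rightarrow> real \<Rightarrow> real \<Rightarrow> real \<Rightarrow> real \<Rightarrow> real \<Rightarrow> real" where
  "polarJ f k c1 c2 r \<theta> pr p\<theta> =
     p\<theta>^3 / 3
     + (cos \<theta> * pr - sin \<theta> * p\<theta> / r) * p\<theta>^2
     + ((2 * deriv f \<theta> + c1) * cos \<theta> - f \<theta> * sin \<theta>) * pr
     - ((3 * deriv f \<theta> + c1) * sin \<theta> + f \<theta> * cos \<theta>) * p\<theta> / r
     - (c2 - deriv f \<theta> + k * sin \<theta>) * p\<theta>"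

end

theory Submission
  imports Defs
begin

lemma algQ:
  fixes r c s a b X Y k g h :: real
  assumes r: "r \<noteq> 0" and cs: "c^2 + s^2 = 1" and X: "X = r * c" and Y: "Y = r * s"
  shows "a * b + - (- k * s / r^2 - 2 * g * s / r^3 + h * c / r^3) * X - (b * a + - (- k * c / r^2 - 2 * g * c / r^3 - h * s / r^3) * Y) = - h / r^2"
proof -
  have "a * b + - (- k * s / r^2 - 2 * g * s / r^3 + h * c / r^3) * X - (b * a + - (- k * c / r^2 - 2 * g * c / r^3 - h * s / r^3) * Y) = - h * (c^2 + s^2) / r^2"
    unfolding X Y using r by (simp add: field_simps power2_eq_square power3_eq_cube)
  then show ?thesis using cs by simp
qed

lemma algP:
  fixes r c s a b X Y k g h p q :: real
  assumes r: "r \<noteq> 0" and cs: "c^2 + s^2 = 1" and X: "X = r * c" and Y: "Y = r * s"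
    and p: "p = (X * a + Y * b) / r" and q: "q = X * b - Y * a"
  shows "((a * a + - (- k * c / r^2 - 2 * g * c / r^3 - h * s / r^3) * X + (b * b + - (- k * s / r^2 - 2 * g * s / r^3 + h * c / r^3) * Y)) * r - (X * a + Y * b) * p) / (r * r) = q^2 / r^3 + k / r^2 + 2 * g / r^3"
proof -
  have lhs: "((a * a + - (- k * c / r^2 - 2 * g * c / r^3 - h * s / r^3) * X + (b * b + - (- k * s / r^2 - 2 * g * s / r^3 + h * c / r^3) * Y)) * r - (X * a + Y * b) * p) / (r * r)
     = ((a*a + b*b) * r^2 - (c*a + s*b)^2 * r^2) / r^3 + (k * (c^2+s^2) / r^2 + 2 * g * (c^2+s^2) / r^3)"
    unfolding p X Y using r by (simp add: field_simps power2_eq_square power3_eq_cube)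
  have rhs: "q^2 / r^3 + k / r^2 + 2 * g / r^3 = (r^2 * (c * b - s * a)^2) / r^3 + (k / r^2 + 2 * g / r^3)"
    unfolding q X Y by (simp add: power2_eq_square algebra_simps)
  have "(a*a + b*b) * r^2 - (c*a + s*b)^2 * r^2 = r^2 * (c * b - s * a)^2 - r^2 * (a*a+b*b) * (c^2+s^2-1)"
    by algebra
  then have "(a*a + b*b) * r^2 - (c*a + s*b)^2 * r^2 = r^2 * (c * b - s * a)^2" using cs by simp
  then show ?thesis unfolding lhs rhs using cs by simp
qed

lemma J_deriv0:
  fixes R th P Q f :: "real \<Rightarrow> real"
  assumes Rpos: "R t > 0"
    and hR: "(R has_real_derivative P t) (at t)"
    and hth: "(th has_real_derivative Q t / R t ^ 2) (at t)"
    and hP: "(P has_real_derivative Q t ^ 2 / R t ^ 3 + k / R t ^ 2 + 2 * deriv f (th t) / R t ^ 3) (at t)"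
    and hQ: "(Q has_real_derivative - deriv (deriv f) (th t) / R t ^ 2) (at t)"
    and hf: "(f has_real_derivative deriv f (th t)) (at (th t))"
    and hf1: "(deriv f has_real_derivative deriv (deriv f) (th t)) (at (th t))"
    and ode1: "sin (th t) * ((3 * deriv f (th t) + c1) * deriv (deriv f) (th t) - 2 * f (th t) * deriv f (th t))
                   + cos (th t) * (f (th t) * deriv (deriv f) (th t) + 4 * (deriv f (th t))^2 + 2 * c1 * deriv f (th t)) = 0"
    and ode2: "(c2 - deriv f (th t)) * deriv (deriv f) (th t) + k * (c1 + 2 * deriv f (th t)) * cos (th t)
                   + k * (deriv (deriv f) (th t) - f (th t)) * sin (th t) = 0"
  shows "((\<lambda>s. polarJ f k c1 c2 (R s) (th s) (P s) (Q s)) has_real_derivative 0) (at t)"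
proof -
  have hf': "((\<lambda>s. f (th s)) has_real_derivative deriv f (th t) * (Q t / R t ^ 2)) (at t)"
    using DERIV_chain2[OF hf hth] .
  have hf1': "((\<lambda>s. deriv f (th s)) has_real_derivative deriv (deriv f) (th t) * (Q t / R t ^ 2)) (at t)"
    using DERIV_chain2[OF hf1 hth] .
  have three: "(3::real) \<noteq> 0" by simp
  have Rne: "R t \<noteq> 0" using Rpos by simp
  show ?thesis
    unfolding polarJ_def
    apply (rule derivative_eq_intros hR hth hP hQ hf' hf1' refl three Rne)+
    apply (rule trans[of _ "((c2 - deriv f (th t)) * deriv (deriv f) (th t) + k * (c1 + 2 * deriv f (th t)) * cos (th t)
                   + k * (deriv (deriv f) (th t) - f (th t)) * sin (th t)) / R t ^ 2 + (sin (th t) * ((3 * deriv f (th t) + c1) * deriv (deriv f) (th t) - 2 * f (th t) * deriv f (th t))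
                   + cos (th t) * (f (th t) * deriv (deriv f) (th t) + 4 * (deriv f (th t))^2 + 2 * c1 * deriv f (th t))) / R t ^ 3"])
     apply (simp add: field_simps Rne power2_eq_square power3_eq_cube)
    apply (simp only: ode1 ode2)
    done
qed

lemma V_line:
  fixes V :: "real \<Rightarrow> real \<Rightarrow> real" and f :: "real \<Rightarrow> real"
  assumes I_open: "open I" and \<Omega>_open: "open \<Omega>"
    and V_polar: "\<forall>\<rho> \<phi>. \<rho> > 0 \<and> \<phi> \<in> I \<and> (\<rho> * cos \<phi>, \<rho> * sin \<phi>) \<in> \<Omega> \<longrightarrow>
                   V (\<rho> * cos \<phi>) (\<rho> * sin \<phi>) = k / \<rho> + deriv f \<phi> / \<rho>^2"
    and Rdef: "R = sqrt (X^2 + Y^2)" and Rpos: "R > 0"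
    and Xp: "X = R * cos \<theta>0" and Yp: "Y = R * sin \<theta>0"
    and th_in: "\<theta>0 \<in> I" and XY: "(X, Y) \<in> \<Omega>"
    and hf1: "(deriv f has_real_derivative F2) (at \<theta>0)"
    and p0: "al * uz + bl = X" and q0: "am * uz + bm = Y"
  shows "deriv (\<lambda>u. V (al * u + bl) (am * u + bm)) uz =
     al * (- k * cos \<theta>0 / R^2 - 2 * deriv f \<theta>0 * cos \<theta>0 / R^3 - F2 * sin \<theta>0 / R^3)
   + am * (- k * sin \<theta>0 / R^2 - 2 * deriv f \<theta>0 * sin \<theta>0 / R^3 + F2 * cos \<theta>0 / R^3)"
proof -
  define p where "p u = al * u + bl" for u
  define q where "q u = am * u + bm" for u
  define A where "A u = p u * cos \<theta>0 + q u * sin \<theta>0" for u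
  define B where "B u = q u * cos \<theta>0 - p u * sin \<theta>0" for u
  define \<phi> where "\<phi> u = \<theta>0 + arctan (B u / A u)" for u
  define h where "h u = k / sqrt (p u ^ 2 + q u ^ 2) + deriv f (\<phi> u) / (p u ^ 2 + q u ^ 2)" for u
  have cs: "cos \<theta>0 ^ 2 + sin \<theta>0 ^ 2 = 1" by simp
  have A0: "A uz = R"
  proof -
    have "A uz - R = R * (cos \<theta>0 ^ 2 + sin \<theta>0 ^ 2 - 1)"
      unfolding A_def p_def q_def p0 q0 by (subst Xp, subst Yp) algebra
    then show ?thesis by simp
  qed
  have B0: "B uz = 0"
    unfolding B_def p_def q_def p0 q0 by (subst Xp, subst Yp) (simp add: algebra_simps)
  have AB: "A u ^ 2 + B u ^ 2 = p u ^ 2 + q u ^ 2" for u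
  proof -
    have "A u ^ 2 + B u ^ 2 - (p u ^ 2 + q u ^ 2) = (p u ^ 2 + q u ^ 2) * (cos \<theta>0 ^ 2 + sin \<theta>0 ^ 2 - 1)"
      unfolding A_def B_def by algebra
    then show ?thesis by simp
  qed
  have contA: "continuous_on UNIV A" unfolding A_def p_def q_def by (intro continuous_intros)
  have openA: "open {u. 0 < A u}"
    using open_Collect_less[OF continuous_on_const contA] by simp
  have contphi: "continuous_on {u. 0 < A u} \<phi>"
    unfolding \<phi>_def B_def A_def p_def q_def
    by (intro continuous_intros) auto
  have open1: "open ({u. 0 < A u} \<inter> \<phi> -` I)"
    using continuous_on_open_vimage[OF openA, of \<phi>] contphi I_open by (simp add: Int_commute)
  have open2: "open ((\<lambda>u. (p u, q u)) -` \<Omega>)"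
    by (rule open_vimage[OF \<Omega>_open]) (unfold p_def q_def, intro continuous_intros)
  define S where "S = ({u. 0 < A u} \<inter> \<phi> -` I) \<inter> (\<lambda>u. (p u, q u)) -` \<Omega>"
  have openS: "open S" unfolding S_def using open1 open2 by blast
  have u0S: "uz \<in> S" using A0 Rpos th_in XY
    by (simp add: S_def \<phi>_def B0 p_def q_def p0 q0)
  have eq: "h u = V (al * u + bl) (am * u + bm)" if uS: "u \<in> S" for u
  proof -
    have Apos: "A u > 0" and phiI: "\<phi> u \<in> I" and inO: "(p u, q u) \<in> \<Omega>" using uS by (auto simp: S_def)
    define z where "z = B u / A u"
    define \<rho> where "\<rho> = sqrt (p u ^ 2 + q u ^ 2)"
    have rho: "\<rho> = A u * sqrt (1 + z^2)"
    proof -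
      have "p u ^ 2 + q u ^ 2 = A u ^ 2 * (1 + z^2)"
        unfolding AB[symmetric] z_def using Apos by (simp add: field_simps power2_eq_square)
      then show ?thesis unfolding \<rho>_def using Apos by (simp add: real_sqrt_mult)
    qed
    have sq: "sqrt (1 + z^2) > 0" by (simp add: add_pos_nonneg)
    have rpos: "\<rho> > 0" using rho Apos sq by simp
    have Az: "A u * z = B u" unfolding z_def using Apos by simp
    have c: "\<rho> * cos (\<phi> u) = p u"
    proof -
      have "\<rho> * cos (\<phi> u) = A u * sqrt (1 + z^2) * (cos \<theta>0 * (1 / sqrt (1 + z^2)) - sin \<theta>0 * (z / sqrt (1 + z^2)))"
        unfolding \<phi>_def z_def[symmetric] by (simp only: cos_add cos_arctan sin_arctan rho)
      also have "\<dots> = A u * cos \<theta>0 - (A u * z) * sin \<theta>0" using sq by (simp add: field_simps)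
      also have "\<dots> = p u"
      proof -
        have "A u * cos \<theta>0 - B u * sin \<theta>0 - p u = p u * (cos \<theta>0 ^ 2 + sin \<theta>0 ^ 2 - 1)"
          unfolding A_def B_def by algebra
        then show ?thesis unfolding Az by simp
      qed
      finally show ?thesis .
    qed
    have s: "\<rho> * sin (\<phi> u) = q u"
    proof -
      have "\<rho> * sin (\<phi> u) = A u * sqrt (1 + z^2) * (sin \<theta>0 * (1 / sqrt (1 + z^2)) + cos \<theta>0 * (z / sqrt (1 + z^2)))"
        unfolding \<phi>_def z_def[symmetric] by (simp only: sin_add cos_arctan sin_arctan rho)
      also have "\<dots> = A u * sin \<theta>0 + (A u * z) * cos \<theta>0" using sq by (simp add: field_simps)
      also have "\<dots> = q u"
      proof -
        have "A u * sin \<theta>0 + B u * cos \<theta>0 - q u = q u * (cos \<theta>0 ^ 2 + sin \<theta>0 ^ 2 - 1)"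
          unfolding A_def B_def by algebra
        then show ?thesis unfolding Az by simp
      qed
      finally show ?thesis .
    qed
    have "V (\<rho> * cos (\<phi> u)) (\<rho> * sin (\<phi> u)) = k / \<rho> + deriv f (\<phi> u) / \<rho>^2"
      by (intro V_polar[rule_format] conjI rpos phiI) (simp add: c s inO)
    from this[unfolded c s] show ?thesis by (simp add: h_def \<rho>_def p_def q_def)
  qed
  have hd: "(h has_real_derivative
     al * (- k * cos \<theta>0 / R^2 - 2 * deriv f \<theta>0 * cos \<theta>0 / R^3 - F2 * sin \<theta>0 / R^3)
   + am * (- k * sin \<theta>0 / R^2 - 2 * deriv f \<theta>0 * sin \<theta>0 / R^3 + F2 * cos \<theta>0 / R^3)) (at uz)"
  proof -
    have hp: "(p has_real_derivative al) (at uz)" unfolding p_def[abs_def]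
      by (auto intro!: derivative_eq_intros)
    have hq: "(q has_real_derivative am) (at uz)" unfolding q_def[abs_def]
      by (auto intro!: derivative_eq_intros)
    have hA: "(A has_real_derivative al * cos \<theta>0 + am * sin \<theta>0) (at uz)" unfolding A_def[abs_def]
      by (auto intro!: derivative_eq_intros hp hq)
    have hB: "(B has_real_derivative am * cos \<theta>0 - al * sin \<theta>0) (at uz)" unfolding B_def[abs_def]
      by (auto intro!: derivative_eq_intros hp hq)
    have Ane: "A uz \<noteq> 0" using A0 Rpos by simp
    have hphi: "(\<phi> has_real_derivative (am * cos \<theta>0 - al * sin \<theta>0) / R) (at uz)"
      unfolding \<phi>_def[abs_def]
      apply (rule derivative_eq_intros hA hB Ane refl)+
      using A0 B0 Rpos by (simp add: field_simps)
    have phi0: "\<phi> uz = \<theta>0" by (simp add: \<phi>_def B0)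
    have hfphi: "((\<lambda>u. deriv f (\<phi> u)) has_real_derivative F2 * ((am * cos \<theta>0 - al * sin \<theta>0) / R)) (at uz)"
      using DERIV_chain2[OF hf1[folded phi0] hphi] .
    have pq0: "p uz ^ 2 + q uz ^ 2 = R ^ 2" using Rdef by (simp add: p_def q_def p0 q0)
    have pqpos: "p uz ^ 2 + q uz ^ 2 > 0" using pq0 Rpos by simp
    have pqne: "p uz ^ 2 + q uz ^ 2 \<noteq> 0" using pqpos by linarith
    have sqne: "sqrt (p uz ^ 2 + q uz ^ 2) \<noteq> 0" using real_sqrt_gt_zero[OF pqpos] by linarith
    have sqR: "sqrt (p uz ^ 2 + q uz ^ 2) = R" using pq0 Rpos by simp
    have pu0: "p uz = R * cos \<theta>0" using p0 Xp by (simp add: p_def)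
    have qu0: "q uz = R * sin \<theta>0" using q0 Yp by (simp add: q_def)
    have hpq: "((\<lambda>u. p u ^ 2 + q u ^ 2) has_real_derivative 2 * p uz * al + 2 * q uz * am) (at uz)"
      by (auto intro!: derivative_eq_intros hp hq)
    have hsq: "((\<lambda>u. sqrt (p u ^ 2 + q u ^ 2)) has_real_derivative inverse (sqrt (p uz ^ 2 + q uz ^ 2)) / 2 * (2 * p uz * al + 2 * q uz * am)) (at uz)"
      using DERIV_chain2[OF DERIV_real_sqrt[OF pqpos] hpq] .
    show ?thesis
      unfolding h_def[abs_def]
      apply (rule hsq hfphi hpq derivative_eq_intros pqne sqne refl)+
      apply (simp only: sqR pq0)
      apply (simp only: phi0 pu0 qu0)
      using Rpos apply (simp add: field_simps power2_eq_square power3_eq_cube)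
      done
  qed
  have "((\<lambda>u. V (al * u + bl) (am * u + bm)) has_real_derivative
     al * (- k * cos \<theta>0 / R^2 - 2 * deriv f \<theta>0 * cos \<theta>0 / R^3 - F2 * sin \<theta>0 / R^3)
   + am * (- k * sin \<theta>0 / R^2 - 2 * deriv f \<theta>0 * sin \<theta>0 / R^3 + F2 * cos \<theta>0 / R^3)) (at uz)"
    by (rule has_field_derivative_transform_within_open[OF hd openS u0S eq])
  then show ?thesis by (rule DERIV_imp_deriv)
qed

theorem mainTheorem15:
  fixes k c1 c2 :: real
    and f :: "real \<Rightarrow> real" and I :: "real set"
    and V :: "real \<Rightarrow> real \<Rightarrow> real" and \<Omega> :: "(real \<times> real) set"
    and T :: "real set"
    and x y \<theta> vx vy :: "real \<Rightarrow> real"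
  assumes k_nz: "k \<noteq> 0"
    and I_interval: "is_interval I" and I_open: "open I"
    and f_smooth: "\<forall>n. \<forall>\<phi>\<in>I. ((deriv ^^ n) f) differentiable (at \<phi>)"
    and ode1: "\<forall>\<phi>\<in>I. sin \<phi> * ((3 * deriv f \<phi> + c1) * deriv (deriv f) \<phi> - 2 * f \<phi> * deriv f \<phi>)
                   + cos \<phi> * (f \<phi> * deriv (deriv f) \<phi> + 4 * (deriv f \<phi>)^2 + 2 * c1 * deriv f \<phi>) = 0"
    and ode2: "\<forall>\<phi>\<in>I. (c2 - deriv f \<phi>) * deriv (deriv f) \<phi> + k * (c1 + 2 * deriv f \<phi>) * cos \<phi>
                   + k * (deriv (deriv f) \<phi> - f \<phi>) * sin \<phi> = 0"
    and \<Omega>_open: "open \<Omega>"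
    and V_polar: "\<forall>\<rho> \<phi>. \<rho> > 0 \<and> \<phi> \<in> I \<and> (\<rho> * cos \<phi>, \<rho> * sin \<phi>) \<in> \<Omega> \<longrightarrow>
                   V (\<rho> * cos \<phi>) (\<rho> * sin \<phi>) = k / \<rho> + deriv f \<phi> / \<rho>^2"
    and T_open: "open T"
    and traj_in: "\<forall>t\<in>T. (x t, y t) \<in> \<Omega>"
    and x_vel: "\<forall>t\<in>T. (x has_real_derivative vx t) (at t)"
    and y_vel: "\<forall>t\<in>T. (y has_real_derivative vy t) (at t)"
    and x_eom: "\<forall>t\<in>T. (vx has_real_derivative (- deriv (\<lambda>u. V u (y t)) (x t))) (at t)"
    and y_eom: "\<forall>t\<in>T. (vy has_real_derivative (- deriv (\<lambda>u. V (x t) u) (y t))) (at t)"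
    and r_pos: "\<forall>t\<in>T. sqrt ((x t)^2 + (y t)^2) > 0"
    and \<theta>_in: "\<forall>t\<in>T. \<theta> t \<in> I"
    and \<theta>_polar: "\<forall>t\<in>T. x t = sqrt ((x t)^2 + (y t)^2) * cos (\<theta> t)
                     \<and> y t = sqrt ((x t)^2 + (y t)^2) * sin (\<theta> t)"
    and \<theta>_diff: "\<forall>t\<in>T. \<theta> differentiable (at t)"
  shows "\<forall>t\<in>T. ((\<lambda>s. polarJ f k c1 c2
                    (sqrt ((x s)^2 + (y s)^2)) (\<theta> s)
                    (deriv (\<lambda>u. sqrt ((x u)^2 + (y u)^2)) s)
                    ((sqrt ((x s)^2 + (y s)^2))^2 * deriv \<theta> s))
                 has_real_derivative 0) (at t)"
proof
  fix t assume tT: "t \<in> T"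
  define R where "R s = sqrt ((x s)^2 + (y s)^2)" for s
  define P where "P s = (x s * vx s + y s * vy s) / R s" for s
  define Q where "Q s = x s * vy s - y s * vx s" for s
  have Rpos: "R s > 0" if "s \<in> T" for s using r_pos that by (simp add: R_def)
  have xp: "x s = R s * cos (\<theta> s)" if "s \<in> T" for s using \<theta>_polar that by (simp add: R_def)
  have yp: "y s = R s * sin (\<theta> s)" if "s \<in> T" for s using \<theta>_polar that by (simp add: R_def)
  have aux: "\<And>a b::real. inverse (sqrt a) / 2 * (2 * b) = b / sqrt a" by (simp add: inverse_eq_divide)
  have hR: "(R has_real_derivative P s) (at s)" if sT: "s \<in> T" for s
  proof -
    have pos: "(x s)^2 + (y s)^2 > 0" using r_pos sT by simp
    have hxy: "((\<lambda>s. (x s)^2 + (y s)^2) has_real_derivative 2 * (x s * vx s + y s * vy s)) (at s)"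
      using x_vel y_vel sT by (auto intro!: derivative_eq_intros)
    have "(R has_real_derivative inverse (sqrt ((x s)^2 + (y s)^2)) / 2 * (2 * (x s * vx s + y s * vy s))) (at s)"
      unfolding R_def[abs_def] using DERIV_chain2[OF DERIV_real_sqrt[OF pos] hxy] .
    then show ?thesis
      by (rule DERIV_cong) (simp only: aux P_def R_def)
  qed
  have hth: "(\<theta> has_real_derivative deriv \<theta> s) (at s)" if "s \<in> T" for s
    using \<theta>_diff that DERIV_deriv_iff_real_differentiable by blast
  have thd: "R s ^ 2 * deriv \<theta> s = Q s" if sT: "s \<in> T" for s
  proof -
    have dx: "((\<lambda>s. R s * cos (\<theta> s)) has_real_derivative P s * cos (\<theta> s) - R s * (sin (\<theta> s) * deriv \<theta> s)) (at s)"
      by (auto intro!: derivative_eq_intros hR[OF sT] hth[OF sT])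
    have dy: "((\<lambda>s. R s * sin (\<theta> s)) has_real_derivative P s * sin (\<theta> s) + R s * (cos (\<theta> s) * deriv \<theta> s)) (at s)"
      by (auto intro!: derivative_eq_intros hR[OF sT] hth[OF sT])
    have "(x has_real_derivative P s * cos (\<theta> s) - R s * (sin (\<theta> s) * deriv \<theta> s)) (at s)"
      by (rule has_field_derivative_transform_within_open[OF dx T_open sT]) (simp add: xp)
    then have vx: "vx s = P s * cos (\<theta> s) - R s * (sin (\<theta> s) * deriv \<theta> s)"
      using x_vel sT DERIV_unique by blast
    have "(y has_real_derivative P s * sin (\<theta> s) + R s * (cos (\<theta> s) * deriv \<theta> s)) (at s)"
      by (rule has_field_derivative_transform_within_open[OF dy T_open sT]) (simp add: yp)
    then have vy: "vy s = P s * sin (\<theta> s) + R s * (cos (\<theta> s) * deriv \<theta> s)"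
      using y_vel sT DERIV_unique by blast
    have "Q s - R s ^ 2 * deriv \<theta> s = R s ^ 2 * deriv \<theta> s * (cos (\<theta> s) ^ 2 + sin (\<theta> s) ^ 2 - 1)"
      unfolding Q_def vx vy xp[OF sT] yp[OF sT] by algebra
    then show ?thesis by simp
  qed
  have dR: "deriv R s = P s" if "s \<in> T" for s using hR[OF that] by (rule DERIV_imp_deriv)
  have Rt: "R t > 0" using Rpos tT .
  have thI: "\<theta> t \<in> I" using \<theta>_in tT by simp
  have hf: "(f has_real_derivative deriv f (\<theta> t)) (at (\<theta> t))"
  proof -
    have "((deriv ^^ 0) f) differentiable (at (\<theta> t))" using f_smooth thI by blast
    then show ?thesis using DERIV_deriv_iff_real_differentiable by simp
  qed
  have hf1: "(deriv f has_real_derivative deriv (deriv f) (\<theta> t)) (at (\<theta> t))"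
  proof -
    have "((deriv ^^ 1) f) differentiable (at (\<theta> t))" using f_smooth thI by blast
    then show ?thesis using DERIV_deriv_iff_real_differentiable by simp
  qed
  have XY: "(x t, y t) \<in> \<Omega>" using traj_in tT by simp
  have Rdef: "R t = sqrt ((x t)^2 + (y t)^2)" by (simp add: R_def)
  have Vx: "deriv (\<lambda>u. V u (y t)) (x t) =
     (- k * cos (\<theta> t) / R t^2 - 2 * deriv f (\<theta> t) * cos (\<theta> t) / R t^3 - deriv (deriv f) (\<theta> t) * sin (\<theta> t) / R t^3)"
    using V_line[where al=1 and bl=0 and am=0 and bm="y t" and uz="x t",
        OF I_open \<Omega>_open V_polar Rdef Rt xp[OF tT] yp[OF tT] thI XY hf1] by simp
  have Vy: "deriv (\<lambda>u. V (x t) u) (y t) =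
     (- k * sin (\<theta> t) / R t^2 - 2 * deriv f (\<theta> t) * sin (\<theta> t) / R t^3 + deriv (deriv f) (\<theta> t) * cos (\<theta> t) / R t^3)"
    using V_line[where al=0 and bl="x t" and am=1 and bm=0 and uz="y t",
        OF I_open \<Omega>_open V_polar Rdef Rt xp[OF tT] yp[OF tT] thI XY hf1] by simp
  have hvx: "(vx has_real_derivative - (- k * cos (\<theta> t) / R t^2 - 2 * deriv f (\<theta> t) * cos (\<theta> t) / R t^3 - deriv (deriv f) (\<theta> t) * sin (\<theta> t) / R t^3)) (at t)"
    using x_eom[rule_format, OF tT] unfolding Vx .
  have hvy: "(vy has_real_derivative - (- k * sin (\<theta> t) / R t^2 - 2 * deriv f (\<theta> t) * sin (\<theta> t) / R t^3 + deriv (deriv f) (\<theta> t) * cos (\<theta> t) / R t^3)) (at t)"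
    using y_eom[rule_format, OF tT] unfolding Vy .
  have hx: "(x has_real_derivative vx t) (at t)" using x_vel tT by simp
  have hy: "(y has_real_derivative vy t) (at t)" using y_vel tT by simp
  have Rne: "R t \<noteq> 0" using Rt by simp
  have cs: "cos (\<theta> t) ^ 2 + sin (\<theta> t) ^ 2 = 1" by simp
  have hP: "(P has_real_derivative Q t ^ 2 / R t ^ 3 + k / R t ^ 2 + 2 * deriv f (\<theta> t) / R t ^ 3) (at t)"
    unfolding P_def[abs_def]
    apply (rule derivative_eq_intros hx hy hvx hvy hR[OF tT] Rne refl)+
    apply (rule algP[OF Rne cs xp[OF tT] yp[OF tT]])
     apply (simp add: P_def)
    apply (simp add: Q_def)
    done
  have hQ: "(Q has_real_derivative - deriv (deriv f) (\<theta> t) / R t ^ 2) (at t)"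
    unfolding Q_def[abs_def]
    apply (rule derivative_eq_intros hx hy hvx hvy refl)+
    apply (rule algQ[OF Rne cs xp[OF tT] yp[OF tT]])
    done
  have hth': "(\<theta> has_real_derivative Q t / R t ^ 2) (at t)"
  proof -
    have "deriv \<theta> t = Q t / R t ^ 2" using thd[OF tT] Rne by (simp add: field_simps)
    then show ?thesis using hth[OF tT] by simp
  qed
  have J0: "((\<lambda>s. polarJ f k c1 c2 (R s) (\<theta> s) (P s) (Q s)) has_real_derivative 0) (at t)"
    by (rule J_deriv0[OF Rt hR[OF tT] hth' hP hQ hf hf1 ode1[rule_format, OF thI] ode2[rule_format, OF thI]])
  show "((\<lambda>s. polarJ f k c1 c2
                    (sqrt ((x s)^2 + (y s)^2)) (\<theta> s)
                    (deriv (\<lambda>u. sqrt ((x u)^2 + (y u)^2)) s)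
                    ((sqrt ((x s)^2 + (y s)^2))^2 * deriv \<theta> s))
                 has_real_derivative 0) (at t)"
  proof (rule has_field_derivative_transform_within_open[OF J0 T_open tT])
    fix s assume sT: "s \<in> T"
    have e1: "(\<lambda>u. sqrt ((x u)^2 + (y u)^2)) = R" by (simp add: R_def[abs_def])
    show "polarJ f k c1 c2 (R s) (\<theta> s) (P s) (Q s) = polarJ f k c1 c2
                    (sqrt ((x s)^2 + (y s)^2)) (\<theta> s)
                    (deriv (\<lambda>u. sqrt ((x u)^2 + (y u)^2)) s)
                    ((sqrt ((x s)^2 + (y s)^2))^2 * deriv \<theta> s)"
      unfolding e1 dR[OF sT] R_def[symmetric] thd[OF sT] ..
  qed
qed

end
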